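(* Let $X$, $Y_k$ ($k\in\mathbb N$) and norms $\|\cdot\|_{X\oplus Y_k}$ be as in the generalized $\ell^2$-sum setting. Let $X_1,X_2$ be subspaces of $X$ with $X=X_1\oplus X_2$, and let $c>0$. If for every $k\in\mathbb N$ $$\|x_1+x_2+y_k\|_{X\oplus Y_k}\ge\|x_1\|_X+c\|x_2+y_k\|_{X\oplus Y_k},\qquad x_1\in X_1,\ x_2\in X_2,\ y_k\in Y_k,$$ then $$\Big\|x_1+x_2+\sum_ky_k\Big\|_\Sigma\ge\|x_1\|_X+c\Big\|x_2+\sum_ky_k\Big\|_\Sigma$$ for every $x_1+x_2+\sum_ky_k\in\Sigma(X\oplus Y_k)$ with $x_1\in X_1$, $x_2\in X_2$, $y_k\in Y_k$.
   Context: Setting: $(X,\|\cdot\|_X)$ and $(Y_k,\|\cdot\|_{Y_k})$, $k\in\mathbb N$, are Banach spaces; for each $k$, $\|\cdot\|_{X\oplus Y_k}$ is a norm on $X\oplus Y_k$ coinciding with $\|\cdot\|_X$ on $X$ and with $\|\cdot\|_{Y_k}$ on $Y_k$, and monotone: $\|x+y_k\|_{X\oplus Y_k}\ge\|x\|_X$. Duals of direct sums are identified with direct sums of duals via $(x^*+y^* )(x+y)=x^*(x)+y^*(y)$. $\Lambda(X\oplus Y_k)$ is the set of functionals $x^*+\sum_k\alpha_ky_k^*$ with $x^*\in X^*$, $y_k^*\in Y_k^*$, $\|x^*+y_k^*\|_{X\oplus Y_k}\le1$ for all $k$, $0\le\alpha_k\le1$, $\sum\alpha_k^2\le1$. $\Sigma(X\oplus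 Y_k)=\{x+y_1+y_2+\dots:x\in X,y_k\in Y_k,\sum\|y_k\|_{Y_k}^2<\infty\}$ with $\|z\|_\Sigma=\sup\{|z^*(z)|:z^*\in\Lambda(X\oplus Y_k)\}$. *)

theory Defs
  imports "HOL-Analysis.Analysis"
begin

text \<open>The spaces Y_k are modelled as
  linear subspaces Y k of an ambient real vector space 'y. For each k,
  N k x v is the norm of x + v in X (+) Y_k (for x in X and v in Y k).
  The norm of Y_k is N k 0.\<close>

definition is_sum_norm :: "('x::real_normed_vector \<Rightarrow> 'y::real_vector \<Rightarrow> real) \<Rightarrow> 'y set \<Rightarrow> bool" where
  "is_sum_norm M Yk \<longleftrightarrow>
     (\<forall>x. \<forall>v\<in>Yk. 0 \<le> M x v \<and> (M x v = 0 \<longleftrightarrow> x = 0 \<and> v = 0)) \<and>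
     (\<forall>c x. \<forall>v\<in>Yk. M (c *\<^sub>R x) (c *\<^sub>R v) = \<bar>c\<bar> * M x v) \<and>
     (\<forall>x x'. \<forall>v\<in>Yk. \<forall>v'\<in>Yk. M (x + x') (v + v') \<le> M x v + M x' v')"

definition complete_wrt :: "('y::real_vector \<Rightarrow> real) \<Rightarrow> 'y set \<Rightarrow> bool" where
  "complete_wrt n Yk \<longleftrightarrow>
     (\<forall>s. (\<forall>i. s i \<in> Yk) \<longrightarrow> (\<forall>e>0. \<exists>M. \<forall>i\<ge>M. \<forall>j\<ge>M. n (s i - s j) < e) \<longrightarrow>
          (\<exists>l\<in>Yk. (\<lambda>i. n (s i - l)) \<longlonglongrightarrow> 0))"

definition gen_l2_setting ::
  "(nat \<Rightarrow> 'x::banach \<Rightarrow> 'y::real_vector \<Rightarrow> real) \<Rightarrow> (nat \<Rightarrow> 'y set) \<Rightarrow> bool" where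
  "gen_l2_setting N Y \<longleftrightarrow>
     (\<forall>k. subspace (Y k) \<and> is_sum_norm (N k) (Y k) \<and> complete_wrt (N k 0) (Y k) \<and>
          (\<forall>x. N k x 0 = norm x) \<and>
          (\<forall>x. \<forall>v\<in>Y k. N k x v \<ge> norm x))"

definition dual_elem :: "('y::real_vector \<Rightarrow> real) \<Rightarrow> 'y set \<Rightarrow> ('y \<Rightarrow> real) \<Rightarrow> bool" where
  "dual_elem n Yk f \<longleftrightarrow>
     (\<forall>a\<in>Yk. \<forall>b\<in>Yk. f (a + b) = f a + f b) \<and>
     (\<forall>c. \<forall>a\<in>Yk. f (c *\<^sub>R a) = c * f a) \<and>
     (\<exists>B. \<forall>a\<in>Yk. \<bar>f a\<bar> \<le> B * n a)"

text \<open>Elements x + y_1 + y_2 + ... of Sigma, represented as pairs (x, y).\<close>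
definition in_Sigma :: "(nat \<Rightarrow> 'x::banach \<Rightarrow> 'y::real_vector \<Rightarrow> real) \<Rightarrow> (nat \<Rightarrow> 'y set)
    \<Rightarrow> 'x \<times> (nat \<Rightarrow> 'y) \<Rightarrow> bool" where
  "in_Sigma N Y z \<longleftrightarrow> (\<forall>k. snd z k \<in> Y k) \<and> summable (\<lambda>k. (N k 0 (snd z k))\<^sup>2)"

definition Lambda :: "(nat \<Rightarrow> 'x::banach \<Rightarrow> 'y::real_vector \<Rightarrow> real) \<Rightarrow> (nat \<Rightarrow> 'y set)
    \<Rightarrow> ('x \<times> (nat \<Rightarrow> 'y) \<Rightarrow> real) set" where
  "Lambda N Y = {(\<lambda>(x, y). xs x + (\<Sum>k. \<alpha> k * ys k (y k))) | xs ys \<alpha>.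
      bounded_linear xs \<and>
      (\<forall>k. dual_elem (N k 0) (Y k) (ys k)) \<and>
      (\<forall>k. \<forall>x. \<forall>v\<in>Y k. \<bar>xs x + ys k v\<bar> \<le> N k x v) \<and>
      (\<forall>k. 0 \<le> \<alpha> k \<and> \<alpha> k \<le> 1) \<and>
      summable (\<lambda>k. (\<alpha> k)\<^sup>2) \<and> (\<Sum>k. (\<alpha> k)\<^sup>2) \<le> 1}"

definition sigma_norm :: "(nat \<Rightarrow> 'x::banach \<Rightarrow> 'y::real_vector \<Rightarrow> real) \<Rightarrow> (nat \<Rightarrow> 'y set)
    \<Rightarrow> 'x \<times> (nat \<Rightarrow> 'y) \<Rightarrow> real" where
  "sigma_norm N Y z = Sup {\<bar>f z\<bar> | f. f \<in> Lambda N Y}"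

end

theory Submission
  imports Defs
begin


definition goodG :: "'a::real_normed_vector \<Rightarrow> ('a \<times> real) set \<Rightarrow> bool" where
  "goodG x0 G \<longleftrightarrow> (\<forall>x a b. (x,a)\<in>G \<longrightarrow> (x,b)\<in>G \<longrightarrow> a = b) \<and>
     (\<forall>x a y b. (x,a)\<in>G \<longrightarrow> (y,b)\<in>G \<longrightarrow> (x+y,a+b)\<in>G) \<and>
     (\<forall>x a r. (x,a)\<in>G \<longrightarrow> (r *\<^sub>R x, r*a)\<in>G) \<and>
     (\<forall>x a. (x,a)\<in>G \<longrightarrow> a \<le> norm x) \<and> (x0, norm x0) \<in> G"

lemma goodG_D:
  assumes "goodG x0 G"
  shows "\<And>x a b. (x,a)\<in>G \<Longrightarrow> (x,b)\<in>G \<Longrightarrow> a = b"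
    and "\<And>x a y b. (x,a)\<in>G \<Longrightarrow> (y,b)\<in>G \<Longrightarrow> (x+y,a+b)\<in>G"
    and "\<And>x a r. (x,a)\<in>G \<Longrightarrow> (r *\<^sub>R x, r*a)\<in>G"
    and "\<And>x a. (x,a)\<in>G \<Longrightarrow> a \<le> norm x" and "(x0, norm x0) \<in> G"
  using assms unfolding goodG_def by blast+

lemma goodG_extend:
  assumes g: "goodG x0 G" and z: "z \<notin> fst ` G"
  shows "\<exists>G'. goodG x0 G' \<and> G \<subseteq> G' \<and> G' \<noteq> G"
proof -
  have fn1: "\<And>x a b. (x,a)\<in>G \<Longrightarrow> (x,b)\<in>G \<Longrightarrow> a = b"
    and add: "\<And>x a y b. (x,a)\<in>G \<Longrightarrow> (y,b)\<in>G \<Longrightarrow> (x+y,a+b)\<in>G"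
    and sc: "\<And>x a r. (x,a)\<in>G \<Longrightarrow> (r *\<^sub>R x, r*a)\<in>G"
    and dom: "\<And>x a. (x,a)\<in>G \<Longrightarrow> a \<le> norm x" and x0: "(x0, norm x0) \<in> G"
    using goodG_D[OF g] by blast+
  have z0: "(0,0) \<in> G" using sc[OF x0, of 0] by simp
  have key: "a - norm (x - z) \<le> norm (y + z) - b" if "(x,a)\<in>G" "(y,b)\<in>G" for x a y b
  proof -
    have "a + b \<le> norm (x + y)" using dom[OF add[OF that]] .
    also have "x + y = (x - z) + (y + z)" by simp
    also have "norm ((x - z) + (y + z)) \<le> norm (x - z) + norm (y + z)" by (rule norm_triangle_ineq)
    finally show ?thesis by simp
  qed
  define S where "S = {a - norm (x - z) | x a. (x,a)\<in>G}"
  define s where "s = Sup S"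
  have Sne: "S \<noteq> {}" using z0 unfolding S_def by blast
  have Sbdd: "bdd_above S" unfolding S_def bdd_above_def
    using key[OF _ z0] by force
  have s_ge: "a - norm (x - z) \<le> s" if "(x,a)\<in>G" for x a
    unfolding s_def by (rule cSup_upper[OF _ Sbdd]) (use that S_def in blast)
  have s_le: "s \<le> norm (y + z) - b" if "(y,b)\<in>G" for y b
    unfolding s_def by (rule cSup_least[OF Sne]) (use key that S_def in blast)
  define G' where "G' = {(x + t *\<^sub>R z, a + t * s) | x a t. (x,a)\<in>G}"
  have "goodG x0 G'"
    unfolding goodG_def
  proof (intro conjI allI impI)
    fix p a b assume "(p,a)\<in>G'" "(p,b)\<in>G'"
    then obtain x a0 t x' b0 t' where h: "(x,a0)\<in>G" "(x',b0)\<in>G" "p = x + t *\<^sub>R z" "a = a0 + t * s"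
      "p = x' + t' *\<^sub>R z" "b = b0 + t' * s" unfolding G'_def by blast
    have tt: "t = t'"
    proof (rule ccontr)
      assume ne: "t \<noteq> t'"
      have "(x + (-1) *\<^sub>R x', a0 + (-1)*b0) \<in> G" using add[OF h(1) sc[OF h(2), of "-1"]] .
      hence "((1/(t'-t)) *\<^sub>R (x + (-1) *\<^sub>R x'), (1/(t'-t)) * (a0 + (-1)*b0)) \<in> G" by (rule sc)
      moreover have "(1/(t'-t)) *\<^sub>R (x + (-1) *\<^sub>R x') = z"
      proof -
        have "x - x' = (t' - t) *\<^sub>R z" using h(3,5) by (simp add: algebra_simps)
        thus ?thesis using ne by (simp add: scaleR_diff_right)
      qed
      ultimately have "z \<in> fst ` G" by force
      with z show False by simp
    qed
    hence "x = x'" using h by simp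
    hence "a0 = b0" using fn1 h by blast
    thus "a = b" using h tt by simp
  next
    fix p a q b assume "(p,a)\<in>G'" "(q,b)\<in>G'"
    then obtain x a0 t x' b0 t' where h: "(x,a0)\<in>G" "(x',b0)\<in>G" "p = x + t *\<^sub>R z" "a = a0 + t * s"
      "q = x' + t' *\<^sub>R z" "b = b0 + t' * s" unfolding G'_def by blast
    have "(x + x', a0 + b0) \<in> G" using add h by blast
    moreover have "p + q = (x + x') + (t + t') *\<^sub>R z" "a + b = (a0 + b0) + (t+t') * s"
      using h by (simp_all add: algebra_simps)
    ultimately show "(p+q, a+b)\<in>G'" unfolding G'_def by blast
  next
    fix p a r assume "(p,a)\<in>G'"
    then obtain x a0 t where h: "(x,a0)\<in>G" "p = x + t *\<^sub>R z" "a = a0 + t * s"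
      unfolding G'_def by blast
    have "(r *\<^sub>R x, r * a0) \<in> G" using sc h by blast
    moreover have "r *\<^sub>R p = r *\<^sub>R x + (r*t) *\<^sub>R z" "r * a = r * a0 + (r*t) * s"
      using h by (simp_all add: algebra_simps)
    ultimately show "(r *\<^sub>R p, r*a)\<in>G'" unfolding G'_def by blast
  next
    fix p a assume "(p,a)\<in>G'"
    then obtain x a0 t where h: "(x,a0)\<in>G" "p = x + t *\<^sub>R z" "a = a0 + t * s"
      unfolding G'_def by blast
    consider "t = 0" | "t > 0" | "t < 0" by linarith
    thus "a \<le> norm p"
    proof cases
      case 1 thus ?thesis using h dom by simp
    next
      case 2
      have "((1/t) *\<^sub>R x, (1/t)*a0) \<in> G" using sc h by blast
      hence "s \<le> norm ((1/t) *\<^sub>R x + z) - (1/t)*a0" by (rule s_le)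
      hence "t * s \<le> t * (norm ((1/t) *\<^sub>R x + z) - (1/t)*a0)" using 2 by simp
      also have "\<dots> = norm (t *\<^sub>R ((1/t) *\<^sub>R x + z)) - a0" using 2
        by (simp add: right_diff_distrib)
      also have "t *\<^sub>R ((1/t) *\<^sub>R x + z) = p" using 2 h by (simp add: scaleR_add_right)
      finally show ?thesis using h by simp
    next
      case 3
      define r where "r = -t"
      have r: "r > 0" using 3 r_def by simp
      have "((1/r) *\<^sub>R x, (1/r)*a0) \<in> G" using sc h by blast
      hence "(1/r)*a0 - norm ((1/r) *\<^sub>R x - z) \<le> s" by (rule s_ge)
      hence "r * ((1/r)*a0 - norm ((1/r) *\<^sub>R x - z)) \<le> r * s" using r by (intro mult_left_mono) auto
      moreover have "r * ((1/r)*a0 - norm ((1/r) *\<^sub>R x - z)) = a0 - norm (r *\<^sub>R ((1/r) *\<^sub>R x - z))"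
        using r by (simp add: right_diff_distrib)
      moreover have "r *\<^sub>R ((1/r) *\<^sub>R x - z) = p" using r h r_def by (simp add: scaleR_diff_right)
      ultimately have "a0 - norm p \<le> r * s" by simp
      thus ?thesis using h r_def by simp
    qed
  next
    have "(x0, norm x0) = (x0 + 0 *\<^sub>R z, norm x0 + 0 * s)" by simp
    thus "(x0, norm x0) \<in> G'" unfolding G'_def using x0 by blast
  qed
  moreover have "G \<subseteq> G'"
  proof
    fix p assume "p \<in> G"
    then obtain x a where "p = (x,a)" "(x,a) \<in> G" by (cases p) auto
    moreover have "(x,a) = (x + 0 *\<^sub>R z, a + 0 * s)" by simp
    ultimately show "p \<in> G'" unfolding G'_def by blast
  qed
  moreover have "(z, s) = (0 + 1 *\<^sub>R z, 0 + 1 * s)" by simp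
  hence "(z, s) \<in> G'" unfolding G'_def using z0 by blast
  hence "G' \<noteq> G" using z by force
  ultimately show ?thesis by blast
qed

lemma hb_norming:
  fixes x0 :: "'a::real_normed_vector"
  shows "\<exists>u. bounded_linear u \<and> u x0 = norm x0 \<and> (\<forall>x. \<bar>u x\<bar> \<le> norm x)"
proof -
  define A where "A = {G. goodG x0 G}"
  define G0 where "G0 = {(r *\<^sub>R x0, r * norm x0) | r. True}"
  have G0: "goodG x0 G0" unfolding goodG_def G0_def
  proof (intro conjI allI impI)
    fix x a b assume "(x,a) \<in> {(r *\<^sub>R x0, r * norm x0) | r. True}" "(x,b) \<in> {(r *\<^sub>R x0, r * norm x0) | r. True}"
    then obtain r r' where "x = r *\<^sub>R x0" "a = r * norm x0" "x = r' *\<^sub>R x0" "b = r' * norm x0" by blast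
    thus "a = b" by (cases "x0 = 0") auto
  next
    fix x a assume "(x,a) \<in> {(r *\<^sub>R x0, r * norm x0) | r. True}"
    then obtain r where "x = r *\<^sub>R x0" "a = r * norm x0" by blast
    thus "a \<le> norm x" by (simp add: mult_right_mono)
  next
    fix x a y b assume "(x,a) \<in> {(r *\<^sub>R x0, r * norm x0) | r. True}" "(y,b) \<in> {(r *\<^sub>R x0, r * norm x0) | r. True}"
    then obtain r r' where "x = r *\<^sub>R x0" "a = r * norm x0" "y = r' *\<^sub>R x0" "b = r' * norm x0" by blast
    thus "(x+y,a+b) \<in> {(r *\<^sub>R x0, r * norm x0) | r. True}"
    proof -
      assume h: "x = r *\<^sub>R x0" "a = r * norm x0" "y = r' *\<^sub>R x0" "b = r' * norm x0"
      have "(x+y,a+b) = ((r+r') *\<^sub>R x0, (r+r') * norm x0)" using h by (simp add: algebra_simps)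
      thus ?thesis by blast
    qed
  next
    fix x a t assume "(x,a) \<in> {(r *\<^sub>R x0, r * norm x0) | r. True}"
    then obtain r where "x = r *\<^sub>R x0" "a = r * norm x0" by blast
    thus "(t *\<^sub>R x, t*a) \<in> {(r *\<^sub>R x0, r * norm x0) | r. True}"
    proof -
      assume h: "x = r *\<^sub>R x0" "a = r * norm x0"
      have "(t *\<^sub>R x, t*a) = ((t*r) *\<^sub>R x0, (t*r) * norm x0)" using h by simp
      thus ?thesis by blast
    qed
  next
    show "(x0, norm x0) \<in> {(r *\<^sub>R x0, r * norm x0) | r. True}"
    proof -
      have "(x0, norm x0) = (1 *\<^sub>R x0, 1 * norm x0)" by simp
      thus ?thesis by blast
    qed
  qed
  have "\<forall>C\<in>chains A. \<exists>U\<in>A. \<forall>X\<in>C. X \<subseteq> U"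
  proof
    fix C assume C: "C \<in> chains A"
    show "\<exists>U\<in>A. \<forall>X\<in>C. X \<subseteq> U"
    proof (cases "C = {}")
      case True thus ?thesis using G0 A_def by blast
    next
      case False
      then obtain G1 where G1: "G1 \<in> C" by blast
      have CA: "\<And>G. G \<in> C \<Longrightarrow> goodG x0 G" using chainsD2[OF C] A_def by blast
      have ch: "\<And>G H. G \<in> C \<Longrightarrow> H \<in> C \<Longrightarrow> G \<subseteq> H \<or> H \<subseteq> G" using chainsD[OF C] by blast
      have "goodG x0 (\<Union>C)" unfolding goodG_def
      proof (intro conjI allI impI)
        fix x a b assume "(x,a) \<in> \<Union>C" "(x,b) \<in> \<Union>C"
        then obtain G H where "G\<in>C" "H\<in>C" "(x,a)\<in>G" "(x,b)\<in>H" by blast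
        hence "G \<subseteq> H \<or> H \<subseteq> G" "goodG x0 G" "goodG x0 H" using ch CA by blast+
        thus "a = b" using goodG_D(1) \<open>(x,a)\<in>G\<close> \<open>(x,b)\<in>H\<close> by blast
      next
        fix x a y b assume "(x,a) \<in> \<Union>C" "(y,b) \<in> \<Union>C"
        then obtain G H where GH: "G\<in>C" "H\<in>C" "(x,a)\<in>G" "(y,b)\<in>H" by blast
        show "(x+y,a+b) \<in> \<Union>C"
        proof (cases "G \<subseteq> H")
          case True thus ?thesis using GH goodG_D(2)[OF CA[of H]] by blast
        next
          case False hence "H \<subseteq> G" using ch GH by blast
          thus ?thesis using GH goodG_D(2)[OF CA[of G]] by blast
        qed
      next
        fix x a r assume "(x,a) \<in> \<Union>C"
        thus "(r *\<^sub>R x, r*a) \<in> \<Union>C" using CA goodG_D(3) by blast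
      next
        fix x a assume "(x,a) \<in> \<Union>C"
        thus "a \<le> norm x" using CA goodG_D(4) by blast
      next
        show "(x0, norm x0) \<in> \<Union>C" using G1 goodG_D(5)[OF CA[OF G1]] by blast
      qed
      thus ?thesis using A_def by blast
    qed
  qed
  from Zorn_Lemma2[OF this] obtain M where M: "M \<in> A" "\<forall>X\<in>A. M \<subseteq> X \<longrightarrow> X = M" by blast
  have gM: "goodG x0 M" using M A_def by blast
  have full: "x \<in> fst ` M" for x
  proof (rule ccontr)
    assume "x \<notin> fst ` M"
    from goodG_extend[OF gM this] obtain G' where "goodG x0 G'" "M \<subseteq> G'" "G' \<noteq> M" by blast
    thus False using M A_def by blast
  qed
  have fn1: "\<And>x a b. (x,a)\<in>M \<Longrightarrow> (x,b)\<in>M \<Longrightarrow> a = b"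
    and add: "\<And>x a y b. (x,a)\<in>M \<Longrightarrow> (y,b)\<in>M \<Longrightarrow> (x+y,a+b)\<in>M"
    and sc: "\<And>x a r. (x,a)\<in>M \<Longrightarrow> (r *\<^sub>R x, r*a)\<in>M"
    and dom: "\<And>x a. (x,a)\<in>M \<Longrightarrow> a \<le> norm x" and x0: "(x0, norm x0) \<in> M"
    using goodG_D[OF gM] by blast+
  define u where "u x = (THE a. (x,a) \<in> M)" for x
  have uM: "(x, u x) \<in> M" for x
  proof -
    obtain a where "(x,a) \<in> M" using full[of x] by force
    hence "(THE a. (x,a) \<in> M) = a" using fn1 by blast
    thus ?thesis using \<open>(x,a) \<in> M\<close> u_def by simp
  qed
  have uadd: "u (x + y) = u x + u y" for x y using fn1[OF uM add[OF uM uM]] by simp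
  have usc: "u (r *\<^sub>R x) = r * u x" for r x using fn1[OF uM sc[OF uM]] by simp
  have ule: "u x \<le> norm x" for x using dom[OF uM] .
  have uabs: "\<bar>u x\<bar> \<le> norm x" for x
  proof -
    have "u (-x) = - u x" using usc[of "-1" x] by simp
    thus ?thesis using ule[of x] ule[of "-x"] by simp
  qed
  have "bounded_linear u"
    by (rule bounded_linear_intro[where K=1]) (use uadd usc uabs in auto)
  moreover have "u x0 = norm x0" using fn1[OF uM x0] .
  ultimately show ?thesis using uabs by blast
qed


lemma setD:
  assumes "gen_l2_setting N Y"
  shows "subspace (Y k)" "N k x 0 = norm x" "v \<in> Y k \<Longrightarrow> N k x v \<ge> norm x"
    "v \<in> Y k \<Longrightarrow> N k x v \<ge> 0"
  using assms unfolding gen_l2_setting_def is_sum_norm_def by blast+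

lemma LambdaE:
  assumes "f \<in> Lambda N Y"
  obtains xs ys \<alpha> where "f = (\<lambda>(x, y). xs x + (\<Sum>k. \<alpha> k * ys k (y k)))"
      "bounded_linear xs"
      "\<forall>k. dual_elem (N k 0) (Y k) (ys k)"
      "\<forall>k. \<forall>x. \<forall>v\<in>Y k. \<bar>xs x + ys k v\<bar> \<le> N k x v"
      "\<forall>k. 0 \<le> \<alpha> k \<and> \<alpha> k \<le> 1"
      "summable (\<lambda>k. (\<alpha> k)\<^sup>2)" "(\<Sum>k. (\<alpha> k)\<^sup>2) \<le> 1"
  using assms unfolding Lambda_def by blast

lemma LambdaI:
  assumes "bounded_linear xs"
      "\<forall>k. dual_elem (N k 0) (Y k) (ys k)"
      "\<forall>k. \<forall>x. \<forall>v\<in>Y k. \<bar>xs x + ys k v\<bar> \<le> N k x v"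
      "\<forall>k. 0 \<le> \<alpha> k \<and> \<alpha> k \<le> 1"
      "summable (\<lambda>k. (\<alpha> k)\<^sup>2)" "(\<Sum>k. (\<alpha> k)\<^sup>2) \<le> 1"
  shows "(\<lambda>(x, y). xs x + (\<Sum>k. \<alpha> k * ys k (y k))) \<in> Lambda N Y"
  using assms unfolding Lambda_def by blast

lemma term_bound:
  assumes set: "gen_l2_setting N Y" and sig: "in_Sigma N Y (x, y)"
    and xs: "bounded_linear xs"
    and cond: "\<forall>k. \<forall>x. \<forall>v\<in>Y k. \<bar>xs x + ys k v\<bar> \<le> N k x v"
    and al: "\<forall>k. 0 \<le> \<alpha> k \<and> \<alpha> k \<le> 1"
    and als: "summable (\<lambda>k. (\<alpha> k)\<^sup>2)" "(\<Sum>k. (\<alpha> k)\<^sup>2) \<le> 1"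
  shows "summable (\<lambda>k. \<alpha> k * ys k (y k))"
    "\<bar>\<Sum>k. \<alpha> k * ys k (y k)\<bar> \<le> (1 + (\<Sum>k. (N k 0 (y k))\<^sup>2)) / 2"
proof -
  have yY: "y k \<in> Y k" for k using sig unfolding in_Sigma_def by simp
  have Ns: "summable (\<lambda>k. (N k 0 (y k))\<^sup>2)" using sig unfolding in_Sigma_def by simp
  have xs0: "xs 0 = 0" using xs by (simp add: bounded_linear.linear linear_0)
  have ysb: "\<bar>ys k (y k)\<bar> \<le> N k 0 (y k)" for k
  proof -
    have "\<bar>xs 0 + ys k (y k)\<bar> \<le> N k 0 (y k)" using cond yY by blast
    thus ?thesis using xs0 by simp
  qed
  define b where "b k = ((\<alpha> k)\<^sup>2 + (N k 0 (y k))\<^sup>2) / 2" for k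
  have bs: "summable b" unfolding b_def using als(1) Ns by (intro summable_divide summable_add)
  have tb: "\<bar>\<alpha> k * ys k (y k)\<bar> \<le> b k" for k
  proof -
    have "\<bar>\<alpha> k * ys k (y k)\<bar> = \<alpha> k * \<bar>ys k (y k)\<bar>" using al by (simp add: abs_mult)
    also have "\<dots> \<le> \<alpha> k * N k 0 (y k)" using al ysb by (simp add: mult_left_mono)
    also have "\<dots> \<le> b k" unfolding b_def using sum_squares_bound[of "\<alpha> k" "N k 0 (y k)"]
      by (simp add: power2_eq_square)
    finally show ?thesis .
  qed
  show s1: "summable (\<lambda>k. \<alpha> k * ys k (y k))"
    by (rule summable_comparison_test'[OF bs, of 0]) (use tb in simp)
  have s2: "summable (\<lambda>k. \<bar>\<alpha> k * ys k (y k)\<bar>)"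
    by (rule summable_comparison_test'[OF bs, of 0]) (use tb in simp)
  have "\<bar>\<Sum>k. \<alpha> k * ys k (y k)\<bar> \<le> (\<Sum>k. \<bar>\<alpha> k * ys k (y k)\<bar>)" by (rule summable_rabs[OF s2])
  also have "\<dots> \<le> suminf b" by (rule suminf_le[OF tb s2 bs])
  also have "suminf b = ((\<Sum>k. (\<alpha> k)\<^sup>2) + (\<Sum>k. (N k 0 (y k))\<^sup>2)) / 2"
    unfolding b_def by (simp add: suminf_divide summable_add als(1) Ns suminf_add)
  also have "\<dots> \<le> (1 + (\<Sum>k. (N k 0 (y k))\<^sup>2)) / 2" using als(2) by simp
  finally show "\<bar>\<Sum>k. \<alpha> k * ys k (y k)\<bar> \<le> (1 + (\<Sum>k. (N k 0 (y k))\<^sup>2)) / 2" .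
qed

lemma lam_bound:
  assumes set: "gen_l2_setting N Y" and sig: "in_Sigma N Y (x, y)" and f: "f \<in> Lambda N Y"
  shows "\<bar>f (x, y)\<bar> \<le> norm x + (1 + (\<Sum>k. (N k 0 (y k))\<^sup>2)) / 2"
proof -
  obtain xs ys \<alpha> where h: "f = (\<lambda>(x, y). xs x + (\<Sum>k. \<alpha> k * ys k (y k)))"
      "bounded_linear xs"
      "\<forall>k. dual_elem (N k 0) (Y k) (ys k)"
      "\<forall>k. \<forall>x. \<forall>v\<in>Y k. \<bar>xs x + ys k v\<bar> \<le> N k x v"
      "\<forall>k. 0 \<le> \<alpha> k \<and> \<alpha> k \<le> 1"
      "summable (\<lambda>k. (\<alpha> k)\<^sup>2)" "(\<Sum>k. (\<alpha> k)\<^sup>2) \<le> 1" by (rule LambdaE[OF f])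
  have tb: "\<bar>\<Sum>k. \<alpha> k * ys k (y k)\<bar> \<le> (1 + (\<Sum>k. (N k 0 (y k))\<^sup>2)) / 2"
    using term_bound[OF set sig h(2) h(4) h(5) h(6) h(7)] by simp
  have ys0: "ys 0 0 = 0"
  proof -
    have "ys 0 (0 *\<^sub>R 0) = 0 * ys 0 0"
      using h(3) subspace_0[OF setD(1)[OF set, of 0]] unfolding dual_elem_def by blast
    thus ?thesis by simp
  qed
  have "\<bar>xs x + ys 0 0\<bar> \<le> N 0 x 0"
    using h(4) subspace_0[OF setD(1)[OF set, of 0]] by blast
  hence "\<bar>xs x\<bar> \<le> norm x" using setD(2)[OF set, of 0 x] ys0 by simp
  moreover have "\<bar>f (x, y)\<bar> \<le> \<bar>xs x\<bar> + \<bar>\<Sum>k. \<alpha> k * ys k (y k)\<bar>"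
    by (simp add: h(1) abs_triangle_ineq)
  ultimately show ?thesis using tb by linarith
qed

lemma zero_Lambda: assumes "gen_l2_setting N Y" shows "(\<lambda>_. 0) \<in> Lambda N Y"
proof -
  have "(\<lambda>(x, y). (\<lambda>_. 0::real) x + (\<Sum>k. (\<lambda>_. 0::real) k * (\<lambda>_ _. 0::real) k (y k))) \<in> Lambda N Y"
    apply (rule LambdaI)
    using setD(4)[OF assms] by (auto simp: dual_elem_def bounded_linear_zero intro: exI[of _ 0])
  thus ?thesis by (simp add: case_prod_beta')
qed

theorem lemma2p6:
  fixes N :: "nat \<Rightarrow> 'x::banach \<Rightarrow> 'y::real_vector \<Rightarrow> real"
    and Y :: "nat \<Rightarrow> 'y set"
    and X1 X2 :: "'x set"
    and c :: real
  assumes setting: "gen_l2_setting N Y"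
    and sub1: "subspace X1" and sub2: "subspace X2"
    and dsum: "X1 \<inter> X2 = {0}" "\<forall>x. \<exists>a\<in>X1. \<exists>b\<in>X2. x = a + b"
    and cpos: "c > 0"
    and hyp: "\<forall>k. \<forall>x1\<in>X1. \<forall>x2\<in>X2. \<forall>v\<in>Y k. N k (x1 + x2) v \<ge> norm x1 + c * N k x2 v"
  shows "\<forall>x1\<in>X1. \<forall>x2\<in>X2. \<forall>y. in_Sigma N Y (x1 + x2, y) \<longrightarrow>
           sigma_norm N Y (x1 + x2, y) \<ge> norm x1 + c * sigma_norm N Y (x2, y)"
proof (intro ballI allI impI)
  fix x1 x2 y assume x1: "x1 \<in> X1" and x2: "x2 \<in> X2" and sig: "in_Sigma N Y (x1 + x2, y)"
  have sig2: "in_Sigma N Y (x2, y)" using sig unfolding in_Sigma_def by simp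
  define P1 where "P1 x = (SOME a. a \<in> X1 \<and> x - a \<in> X2)" for x
  have P1: "P1 x \<in> X1 \<and> x - P1 x \<in> X2" for x
  proof -
    obtain a b where "a \<in> X1" "b \<in> X2" "x = a + b" using dsum(2) by blast
    hence "a \<in> X1 \<and> x - a \<in> X2" by simp
    thus ?thesis unfolding P1_def by (rule someI)
  qed
  have uniq: "P1 x = a" if "a \<in> X1" "x - a \<in> X2" for x a
  proof -
    have "P1 x - a \<in> X1" using subspace_diff[OF sub1] P1 that by blast
    moreover have "P1 x - a = (x - a) - (x - P1 x)" by simp
    hence "P1 x - a \<in> X2" using subspace_diff[OF sub2] P1 that by metis
    ultimately have "P1 x - a \<in> X1 \<inter> X2" by blast
    thus ?thesis using dsum(1) by simp
  qed
  have P1add: "P1 (x + y) = P1 x + P1 y" for x y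
  proof (rule uniq)
    show "P1 x + P1 y \<in> X1" using subspace_add[OF sub1] P1 by blast
    have "x + y - (P1 x + P1 y) = (x - P1 x) + (y - P1 y)" by simp
    thus "x + y - (P1 x + P1 y) \<in> X2" using subspace_add[OF sub2] P1 by metis
  qed
  have P1sc: "P1 (r *\<^sub>R x) = r *\<^sub>R P1 x" for r x
  proof (rule uniq)
    show "r *\<^sub>R P1 x \<in> X1" using subspace_scale[OF sub1] P1 by blast
    have "r *\<^sub>R x - r *\<^sub>R P1 x = r *\<^sub>R (x - P1 x)" by (simp add: scaleR_diff_right)
    thus "r *\<^sub>R x - r *\<^sub>R P1 x \<in> X2" using subspace_scale[OF sub2] P1 by metis
  qed
  have Y0: "0 \<in> Y k" for k using subspace_0[OF setD(1)[OF setting]] .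
  have P1n: "norm (P1 x) \<le> norm x" for x
  proof -
    have "N 0 (P1 x + (x - P1 x)) 0 \<ge> norm (P1 x) + c * N 0 (x - P1 x) 0"
      using hyp P1 Y0 by blast
    moreover have "N 0 (x - P1 x) 0 \<ge> 0" using setD(4)[OF setting Y0] .
    ultimately show ?thesis using setD(2)[OF setting] cpos
      by (smt (verit, ccfv_SIG) add_diff_cancel_left' diff_add_cancel mult_nonneg_nonneg)
  qed
  have blP1: "bounded_linear P1"
    by (rule bounded_linear_intro[where K=1]) (use P1add P1sc P1n in auto)
  define P2 where "P2 x = x - P1 x" for x
  have blP2: "bounded_linear P2" unfolding P2_def
    by (rule bounded_linear_sub[OF bounded_linear_ident blP1])
  have P1x: "P1 (x1 + x2) = x1" by (rule uniq) (use x1 x2 in auto)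
  have P2x: "P2 (x1 + x2) = x2" using P1x unfolding P2_def by simp
  obtain u where u: "bounded_linear u" "u x1 = norm x1" "\<forall>x. \<bar>u x\<bar> \<le> norm x"
    using hb_norming by blast
  define S where "S = {\<bar>f (x1 + x2, y)\<bar> | f. f \<in> Lambda N Y}"
  have bdd: "bdd_above S" unfolding S_def bdd_above_def
    using lam_bound[OF setting sig] by blast
  have key: "norm x1 + d * f (x2, y) \<le> sigma_norm N Y (x1 + x2, y)"
    if f: "f \<in> Lambda N Y" and d: "\<bar>d\<bar> \<le> c" for f d
  proof -
    obtain xs ys \<alpha> where h: "f = (\<lambda>(x, y). xs x + (\<Sum>k. \<alpha> k * ys k (y k)))"
      "bounded_linear xs"
      "\<forall>k. dual_elem (N k 0) (Y k) (ys k)"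
      "\<forall>k. \<forall>x. \<forall>v\<in>Y k. \<bar>xs x + ys k v\<bar> \<le> N k x v"
      "\<forall>k. 0 \<le> \<alpha> k \<and> \<alpha> k \<le> 1"
      "summable (\<lambda>k. (\<alpha> k)\<^sup>2)" "(\<Sum>k. (\<alpha> k)\<^sup>2) \<le> 1" by (rule LambdaE[OF f])
    define xs' where "xs' x = u (P1 x) + d * xs (P2 x)" for x
    define ys' where "ys' k v = d * ys k v" for k v
    define g where "g = (\<lambda>(x, y). xs' x + (\<Sum>k. \<alpha> k * ys' k (y k)))"
    have blxs': "bounded_linear xs'" unfolding xs'_def
      by (intro bounded_linear_add bounded_linear_compose[OF u(1) blP1]
          bounded_linear_mult_right[THEN bounded_linear_compose]
          bounded_linear_compose[OF h(2) blP2])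
    have dys': "dual_elem (N k 0) (Y k) (ys' k)" for k
    proof -
      have a: "\<forall>a\<in>Y k. \<forall>b\<in>Y k. ys k (a + b) = ys k a + ys k b"
        and b: "\<forall>r. \<forall>a\<in>Y k. ys k (r *\<^sub>R a) = r * ys k a"
        using h(3) unfolding dual_elem_def by blast+
      obtain B where B: "\<forall>a\<in>Y k. \<bar>ys k a\<bar> \<le> B * N k 0 a" using h(3) unfolding dual_elem_def by blast
      have Bd: "\<forall>a\<in>Y k. \<bar>ys' k a\<bar> \<le> (\<bar>d\<bar> * B) * N k 0 a"
        unfolding ys'_def using B by (simp add: abs_mult mult.assoc mult_left_mono)
      have c1: "\<forall>a\<in>Y k. \<forall>b\<in>Y k. ys' k (a + b) = ys' k a + ys' k b"
        using a by (simp add: ys'_def algebra_simps)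
      have c2: "\<forall>r. \<forall>a\<in>Y k. ys' k (r *\<^sub>R a) = r * ys' k a"
        using b by (simp add: ys'_def algebra_simps)
      show ?thesis unfolding dual_elem_def using c1 c2 Bd by blast
    qed
    have cond: "\<bar>xs' x + ys' k v\<bar> \<le> N k x v" if v: "v \<in> Y k" for k x v
    proof -
      have "xs' x + ys' k v = u (P1 x) + d * (xs (P2 x) + ys k v)"
        unfolding xs'_def ys'_def by (simp add: algebra_simps)
      hence "\<bar>xs' x + ys' k v\<bar> \<le> \<bar>u (P1 x)\<bar> + \<bar>d\<bar> * \<bar>xs (P2 x) + ys k v\<bar>"
        using abs_triangle_ineq[of "u (P1 x)" "d * (xs (P2 x) + ys k v)"] by (simp add: abs_mult)
      also have "\<dots> \<le> norm (P1 x) + c * N k (P2 x) v"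
      proof (rule add_mono)
        show "\<bar>u (P1 x)\<bar> \<le> norm (P1 x)" using u(3) by blast
        have "\<bar>xs (P2 x) + ys k v\<bar> \<le> N k (P2 x) v" using h(4) v by blast
        thus "\<bar>d\<bar> * \<bar>xs (P2 x) + ys k v\<bar> \<le> c * N k (P2 x) v"
          using d cpos by (intro mult_mono) auto
      qed
      also have "\<dots> \<le> N k (P1 x + P2 x) v"
        using hyp P1 v unfolding P2_def by blast
      also have "P1 x + P2 x = x" unfolding P2_def by simp
      finally show ?thesis .
    qed
    have gL: "g \<in> Lambda N Y" unfolding g_def
      by (rule LambdaI[OF blxs' _ _ h(5) h(6) h(7)]) (use dys' cond in auto)
    have summ: "summable (\<lambda>k. \<alpha> k * ys k (y k))"
      using term_bound(1)[OF setting sig2 h(2) h(4) h(5) h(6) h(7)] .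
    have "(\<Sum>k. \<alpha> k * ys' k (y k)) = (\<Sum>k. d * (\<alpha> k * ys k (y k)))"
      unfolding ys'_def by (simp add: algebra_simps)
    also have "\<dots> = d * (\<Sum>k. \<alpha> k * ys k (y k))" by (rule suminf_mult[OF summ])
    finally have sm: "(\<Sum>k. \<alpha> k * ys' k (y k)) = d * (\<Sum>k. \<alpha> k * ys k (y k))" .
    have "g (x1 + x2, y) = norm x1 + d * f (x2, y)"
      unfolding g_def h(1) xs'_def using P1x P2x u(2) sm by (simp add: algebra_simps)
    moreover have "\<bar>g (x1 + x2, y)\<bar> \<le> sigma_norm N Y (x1 + x2, y)"
      unfolding sigma_norm_def by (rule cSup_upper[OF _ bdd[unfolded S_def]]) (use gL in blast)
    ultimately show ?thesis by linarith
  qed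
  have Sne: "{\<bar>f (x2, y)\<bar> | f. f \<in> Lambda N Y} \<noteq> {}" using zero_Lambda[OF setting] by blast
  have "sigma_norm N Y (x2, y) \<le> (sigma_norm N Y (x1 + x2, y) - norm x1) / c"
    unfolding sigma_norm_def[of N Y "(x2, y)"]
  proof (rule cSup_least[OF Sne])
    fix t assume "t \<in> {\<bar>f (x2, y)\<bar> | f. f \<in> Lambda N Y}"
    then obtain f where f: "f \<in> Lambda N Y" "t = \<bar>f (x2, y)\<bar>" by blast
    have "norm x1 + c * f (x2, y) \<le> sigma_norm N Y (x1 + x2, y)" using key[OF f(1), of c] cpos by simp
    moreover have "norm x1 + (-c) * f (x2, y) \<le> sigma_norm N Y (x1 + x2, y)" using key[OF f(1), of "-c"] cpos by simp
    ultimately have "c * t \<le> sigma_norm N Y (x1 + x2, y) - norm x1" using f(2) by (cases "f (x2, y) \<ge> 0") auto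
    thus "t \<le> (sigma_norm N Y (x1 + x2, y) - norm x1) / c" using cpos by (simp add: pos_le_divide_eq mult.commute)
  qed
  thus "sigma_norm N Y (x1 + x2, y) \<ge> norm x1 + c * sigma_norm N Y (x2, y)"
    using cpos by (simp add: pos_le_divide_eq mult.commute)
qed

end
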